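(* $R_{\mathcal{S}^*_{Ne}}(\mathcal{S}^* )=1/4$, where $\mathcal{S}^*$ is the class of starlike functions; the bound is attained by the Koebe function $k(z)=z/(1-z)^2$, i.e. $\mathcal{Q}_k(\partial\mathbb{D}_{1/4})\cap\partial\Omega_{Ne}\neq\emptyset$.
   Context: $\mathbb{D}=\{|z|<1\}$, $\mathbb{D}_r=\{|z|<r\}$. $\mathcal{A}$ is the class of analytic $f$ on $\mathbb{D}$ with $f(0)=0$, $f'(0)=1$; for $f\in\mathcal{A}$ let $\mathcal{Q}_f(z)=zf'(z)/f(z)$. $\mathcal{S}^*=\{f\in\mathcal{A}:\mathrm{Re}\,\mathcal{Q}_f(z)>0,\ z\in\mathbb{D}\}$. Let $\varphi_{Ne}(z)=1+z-z^3/3$ (univalent on $\mathbb{D}$), $\Omega_{Ne}=\varphi_{Ne}(\mathbb{D})$, and $\mathcal{S}^*_{Ne}=\{f\in\mathcal{A}:\mathcal{Q}_f\prec\varphi_{Ne}\}$, where $F\prec G$ means $F=G\circ w$ for some analytic $w:\mathbb{D}\to\mathbb{D}$, $w(0)=0$. For $\mathcal{G}\subset\mathcal{A}$, $R_{\mathcal{S}^*_{Ne}}(\mathcal{G})$ is the largest $\rho\in(0,1]$ such that $\mathcal{Q}_f(\mathbb{D}_\rho)\subseteq\Omega_{Ne}$ for all $f\in\mathcal{G}$ (equivalently $r^{-1}f(rz)\in\mathcal{S}^*_{Ne}$ for all $f\in\mathcal{G}$, $0<r\le\rho$). *)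

theory Defs
  imports "HOL-Analysis.Analysis"
begin

definition phiNe :: "complex \<Rightarrow> complex" where
  "phiNe z = 1 + z - z ^ 3 / 3"

definition OmegaNe :: "complex set" where
  "OmegaNe = phiNe ` ball 0 1"

definition classA :: "(complex \<Rightarrow> complex) \<Rightarrow> bool" where
  "classA f \<longleftrightarrow> f holomorphic_on ball 0 1 \<and> f 0 = 0 \<and> deriv f 0 = 1"

text \<open>Q_f(z) = z f'(z)/f(z), with its removable value 1 at z = 0 (since f(0)=0, f'(0)=1).\<close>
definition Qf :: "(complex \<Rightarrow> complex) \<Rightarrow> complex \<Rightarrow> complex" where
  "Qf f z = (if z = 0 then 1 else z * deriv f z / f z)"

definition starlike :: "(complex \<Rightarrow> complex) set" where
  "starlike = {f. classA f \<and> (\<forall>z\<in>ball 0 1. Re (Qf f z) > 0)}"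

definition radiusNe :: "(complex \<Rightarrow> complex) set \<Rightarrow> real" where
  "radiusNe G = Sup {\<rho>. 0 < \<rho> \<and> \<rho> \<le> 1 \<and> (\<forall>f\<in>G. Qf f ` ball 0 \<rho> \<subseteq> OmegaNe)}"

definition koebe :: "complex \<Rightarrow> complex" where
  "koebe z = z / (1 - z) ^ 2"

end

theory Submission imports Defs "HOL-Complex_Analysis.Complex_Analysis" begin

lemma poly_ineq:
  fixes x y :: real assumes h: "x^2 + y^2 = 1"
  shows "64/225 \<le> (-2/15 + 2*x - 4*x^3/3)^2 + (4*y^3/3)^2"
proof -
  have y2: "y^2 = 1 - x^2" using h by simp
  have "(4*y^3/3)^2 = 16/9 * (y^2)^3" by (simp add: power_mult_distrib power_divide flip: power_mult) 
  also have "\<dots> = 16/9 * (1-x^2)^3" by (simp add: y2)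
  finally have e: "(4*y^3/3)^2 = 16/9 * (1-x^2)^3" .
  have xx: "x^2 \<le> 1" using h zero_le_power2[of y] by linarith
  then have "\<bar>x\<bar> \<le> 1" by (simp add: abs_square_le_1)
  then have x1: "x \<le> 1" and x2: "-1 \<le> x" by auto
  have q: "4*x^2 - 11*x - 17 \<le> 0" using x1 x2 xx by linarith
  have "(-2/15 + 2*x - 4*x^3/3)^2 + 16/9 * (1-x^2)^3 - 64/225 = 4/45 * ((x-1)*(4*x^2-11*x-17))"
    by (simp add: algebra_simps power2_eq_square power3_eq_cube)
  moreover have "0 \<le> (x-1)*(4*x^2-11*x-17)" using x1 x2 q by (simp add: mult_nonpos_nonpos)
  ultimately show ?thesis using e by linarith
qed

lemma phi_bound:
  assumes "cmod u = 1" shows "8/15 \<le> cmod (phiNe u - 17/15)"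
proof -
  obtain x y where u: "u = Complex x y" by (cases u)
  have h: "x^2+y^2 = 1" using assms u by (simp add: cmod_def)
  have c3: "Complex x y ^ 3 = Complex (x^3 - 3*x*y^2) (3*x^2*y - y^3)"
    by (simp add: power3_eq_cube complex_eq_iff algebra_simps power2_eq_square)
  have y2: "y^2 = 1 - x^2" using h by simp
  have x2': "x^2 = 1 - y^2" using h by simp
  have c3': "Complex x y ^ 3 = Complex (4*x^3-3*x) (3*y-4*y^3)"
    unfolding c3 complex_eq_iff
  proof
    have "x^3 - 3*x*y^2 = x^3 - 3*x*(1-x^2)" by (simp add: y2)
    then show "Re (Complex (x ^ 3 - 3 * x * y\<^sup>2) (3 * x\<^sup>2 * y - y ^ 3)) = Re (Complex (4 * x ^ 3 - 3 * x) (3 * y - 4 * y ^ 3))"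
      by (simp add: algebra_simps power3_eq_cube power2_eq_square)
    have "3*x^2*y - y^3 = 3*(1-y^2)*y - y^3" by (simp add: x2')
    then show "Im (Complex (x ^ 3 - 3 * x * y\<^sup>2) (3 * x\<^sup>2 * y - y ^ 3)) = Im (Complex (4 * x ^ 3 - 3 * x) (3 * y - 4 * y ^ 3))"
      by (simp add: algebra_simps power3_eq_cube power2_eq_square)
  qed
  have re: "Re (phiNe u - 17/15) = -2/15 + 2*x - 4*x^3/3"
    unfolding u phiNe_def c3' by (simp add: field_simps)
  have im: "Im (phiNe u - 17/15) = 4*y^3/3"
    unfolding u phiNe_def c3' by (simp add: field_simps)
  have "(8/15)^2 \<le> (cmod (phiNe u - 17/15))^2"
  proof -
    have e1: "(cmod (phiNe u - 17/15))^2 = (-2/15 + 2*x - 4*x^3/3)^2 + (4*y^3/3)^2"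
      unfolding cmod_power2 re im ..
    have e2: "(8/15::real)^2 = 64/225" by (simp add: power2_eq_square)
    show ?thesis unfolding e1 e2 by (rule poly_ineq[OF h])
  qed
  then show ?thesis by (rule power2_le_imp_le) simp
qed

lemma OmegaNe_open: "open OmegaNe"
  unfolding OmegaNe_def
proof (rule open_mapping_thm[where S=UNIV])
  show "phiNe holomorphic_on UNIV" unfolding phiNe_def by (intro holomorphic_intros) auto
  show "\<not> phiNe constant_on UNIV"
  proof
    assume "phiNe constant_on UNIV"
    then have "phiNe 0 = phiNe 1" unfolding constant_on_def by auto
    then show False by (simp add: phiNe_def)
  qed
qed auto

lemma phiNe_cont: "continuous_on S phiNe"
  unfolding phiNe_def by (intro continuous_intros) auto

lemma frontier_sub: "frontier OmegaNe \<subseteq> phiNe ` sphere 0 1"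
proof
  fix x assume x: "x \<in> frontier OmegaNe"
  have "closed (phiNe ` cball 0 1)"
    by (intro compact_imp_closed compact_continuous_image phiNe_cont compact_cball)
  moreover have "OmegaNe \<subseteq> phiNe ` cball 0 1" unfolding OmegaNe_def by auto
  ultimately have "closure OmegaNe \<subseteq> phiNe ` cball 0 1" by (rule closure_minimal[rotated])
  moreover have "x \<in> closure OmegaNe" using x by (simp add: frontier_def)
  ultimately obtain u where u: "u \<in> cball 0 1" "x = phiNe u" by blast
  have "x \<notin> OmegaNe" using x OmegaNe_open by (simp add: frontier_def interior_open)
  then have "u \<notin> ball 0 1" using u unfolding OmegaNe_def by auto
  with u show "x \<in> phiNe ` sphere 0 1" by auto
qed

lemma ball_sub: "ball (17/15) (8/15) \<subseteq> OmegaNe"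
proof (rule ccontr)
  assume "\<not> ?thesis"
  then have "ball (17/15) (8/15) - OmegaNe \<noteq> {}" by auto
  moreover have "1 \<in> ball (17/15) (8/15) \<inter> OmegaNe"
  proof
    show "(1::complex) \<in> ball (17 / 15) (8 / 15)" by (simp add: dist_norm)
    have "phiNe 0 = 1" by (simp add: phiNe_def)
    then show "(1::complex) \<in> OmegaNe" unfolding OmegaNe_def by force
  qed
  ultimately have "ball (17/15) (8/15) \<inter> frontier OmegaNe \<noteq> {}"
    using connected_Int_frontier[OF connected_ball] by blast
  then obtain u where u: "cmod u = 1" "phiNe u \<in> ball (17/15) (8/15)" using frontier_sub by fastforce
  have "cmod (phiNe u - 17/15) < 8/15" using u(2) by (simp add: dist_norm norm_minus_commute)
  with phi_bound[OF u(1)] show False by simp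
qed

lemma cmod_lt_re: "0 < Re q \<Longrightarrow> cmod (q - 1) < cmod (q + 1)"
  unfolding cmod_def by (intro real_sqrt_less_mono) (simp add: power2_eq_square algebra_simps)

lemma moebius_disk:
  assumes "cmod w < 1/4" shows "(1 + w) / (1 - w) \<in> ball (17/15) (8/15)"
proof -
  have w1: "1 - w \<noteq> 0" using assms by auto
  have "(1 + w) / (1 - w) - 17/15 = (32*w - 2) / (15*(1 - w))"
    using w1 by (simp add: field_simps)
  moreover have "cmod (32*w - 2) < 8 * cmod (1 - w)"
  proof -
    obtain a b where w: "w = Complex a b" by (cases w)
    have "(cmod w)^2 < (1/4)^2" using assms by (intro power_strict_mono) auto
    then have ab: "a^2 + b^2 < 1/16" unfolding cmod_power2 w by (simp add: power2_eq_square)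
    have "(cmod (32*w - 2))^2 = (32*a-2)^2 + (32*b)^2" unfolding cmod_power2 w by simp
    also have "\<dots> < 64 * ((1-a)^2 + b^2)" using ab by (simp add: power2_eq_square algebra_simps)
    also have "\<dots> = (8 * cmod (1 - w))^2" unfolding power_mult_distrib cmod_power2 w by simp
    finally show ?thesis by (rule power2_less_imp_less) simp
  qed
  moreover have "cmod ((32*w - 2) / (15*(1 - w))) = cmod (32*w - 2) / (15 * cmod (1 - w))"
    unfolding norm_divide norm_mult by simp
  moreover have "0 < cmod (1 - w)" using w1 by simp
  ultimately have "cmod ((1 + w) / (1 - w) - 17/15) < 8/15"
    by (simp add: divide_less_eq)
  then show ?thesis by (simp add: dist_norm norm_minus_commute)
qed

lemma star_Q:
  assumes f: "f \<in> starlike" and z: "z \<in> ball 0 (1/4)" shows "Qf f z \<in> OmegaNe"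
proof -
  have hol: "f holomorphic_on ball 0 1" "f 0 = 0" "deriv f 0 = 1"
    and re: "\<And>z. z \<in> ball 0 1 \<Longrightarrow> 0 < Re (Qf f z)"
    using f unfolding starlike_def classA_def by auto
  define g where "g = (\<lambda>z. if z = 0 then deriv f 0 else (f z - f 0)/(z - 0))"
  have gh: "g holomorphic_on ball 0 1" unfolding g_def by (rule pole_lemma_open[OF hol(1)]) auto
  have fnz: "f z \<noteq> 0" if "z \<in> ball 0 1" "z \<noteq> 0" for z
  proof
    assume "f z = 0"
    then have "Qf f z = 0" using that by (simp add: Qf_def)
    with re[OF that(1)] show False by simp
  qed
  have gnz: "g z \<noteq> 0" if "z \<in> ball 0 1" for z using fnz[OF that] hol by (auto simp: g_def)
  have dh: "deriv f holomorphic_on ball 0 1" by (rule holomorphic_deriv[OF hol(1)]) simp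
  have eq: "deriv f z / g z = Qf f z" if "z \<in> ball 0 1" for z
    using hol by (cases "z = 0") (auto simp: g_def Qf_def)
  have ph: "Qf f holomorphic_on ball 0 1"
    by (rule holomorphic_transform[OF holomorphic_on_divide[OF dh gh gnz] eq])
  define w where "w = (\<lambda>z. (Qf f z - 1)/(Qf f z + 1))"
  have pnz: "Qf f z + 1 \<noteq> 0" if "z \<in> ball 0 1" for z
  proof -
    have h0: "0 < Re (Qf f z + 1)" using re[OF that] by simp
    show ?thesis
    proof
      assume "Qf f z + 1 = 0"
      then have "Re (Qf f z + 1) = 0" by (simp only: zero_complex.sel)
      with h0 show False by simp
    qed
  qed
  have wh: "w holomorphic_on ball 0 1" unfolding w_def
    by (rule holomorphic_on_divide) (auto intro!: holomorphic_intros ph pnz)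
  have w0: "w 0 = 0" by (simp add: w_def Qf_def)
  have wlt: "cmod (w z) < 1" if "cmod z < 1" for z
  proof -
    have zb: "z \<in> ball 0 1" using that by simp
    have "cmod (Qf f z - 1) < cmod (Qf f z + 1)" by (rule cmod_lt_re[OF re[OF zb]])
    then show ?thesis unfolding w_def norm_divide using pnz[OF zb] by (simp add: divide_less_eq)
  qed
  have zn: "cmod z < 1/4" using z by simp
  have "cmod (w z) \<le> cmod z" by (rule Schwarz_Lemma(1)[OF wh w0 wlt]) (use zn in auto)
  with zn have wz: "cmod (w z) < 1/4" by simp
  have zb: "z \<in> ball 0 1" using zn by simp
  have a: "1 + w z = 2*Qf f z/(Qf f z+1)" using pnz[OF zb] unfolding w_def by (simp add: field_simps)
  have b: "1 - w z = 2/(Qf f z+1)" using pnz[OF zb] unfolding w_def by (simp add: field_simps)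
  have "Qf f z = (1 + w z)/(1 - w z)"
    unfolding a b using pnz[OF zb] by simp
  then show ?thesis using moebius_disk[OF wz] ball_sub by auto
qed

lemma koebe_deriv: "z \<noteq> 1 \<Longrightarrow> (koebe has_field_derivative (1+z)/(1-z)^3) (at z)"
proof -
  assume z: "z \<noteq> 1"
  have "((\<lambda>z. z / (1 - z)^2) has_field_derivative
        ((1 * (1-z)^2 - z * (of_nat 2 * (1-z)^(2-1) * (0 - 1))) / ((1-z)^2 * (1-z)^2))) (at z)"
    using z by (intro derivative_eq_intros) auto
  moreover have "(1 * (1-z)^2 - z * (of_nat 2 * (1-z)^(2-1) * (0 - 1))) / ((1-z)^2 * (1-z)^2) = (1+z)/(1-z)^3"
  proof -
    have d: "1 - z \<noteq> 0" using z by simp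
    have gen: "\<And>d::complex. d \<noteq> 0 \<Longrightarrow> d*(1+z)/(d^2*d^2) = (1+z)/d^3"
      by (simp add: power2_eq_square power3_eq_cube)
    have "1 * (1-z)^2 - z * (of_nat 2 * (1-z)^(2-1) * (0 - 1)) = (1-z)*(1+z)"
      by (simp add: algebra_simps power2_eq_square)
    then show ?thesis using gen[OF d] by simp
  qed
  ultimately show ?thesis unfolding koebe_def[abs_def] by simp
qed

lemma Qf_koebe: "z \<in> ball 0 1 \<Longrightarrow> Qf koebe z = (1+z)/(1-z)"
proof -
  assume zb: "z \<in> ball 0 1"
  then have z1: "z \<noteq> 1" by auto
  show ?thesis
  proof (cases "z = 0")
    case True then show ?thesis by (simp add: Qf_def)
  next
    case False
    have "deriv koebe z = (1+z)/(1-z)^3" by (rule DERIV_imp_deriv[OF koebe_deriv[OF z1]])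
    have d: "1 - z \<noteq> 0" using z1 by simp
    have gen: "\<And>d::complex. d \<noteq> 0 \<Longrightarrow> z*((1+z)/d^3)/(z/d^2) = (1+z)/d"
      using False by (simp add: power2_eq_square power3_eq_cube)
    show ?thesis using False gen[OF d] \<open>deriv koebe z = _\<close> by (simp add: Qf_def koebe_def)
  qed
qed

lemma koebe_star: "koebe \<in> starlike"
proof -
  have "koebe holomorphic_on ball 0 1" unfolding koebe_def[abs_def]
    by (intro holomorphic_intros) auto
  moreover have "koebe 0 = 0" by (simp add: koebe_def)
  moreover have "deriv koebe 0 = 1" using DERIV_imp_deriv[OF koebe_deriv[of 0]] by simp
  moreover have "0 < Re (Qf koebe z)" if zb: "z \<in> ball 0 1" for z
  proof -
    obtain a b where z: "z = Complex a b" by (cases z)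
    have "(cmod z)^2 < 1" using zb by (simp add: power_less_one_iff abs_square_less_1)
    then have ab: "a^2 + b^2 < 1" unfolding cmod_power2 z by simp
    have "a \<noteq> 1"
    proof
      assume "a = 1" with ab zero_le_power2[of b] show False by simp
    qed
    then have "0 < (1-a)^2" by simp
    then have nz: "(1-a)^2 + b^2 > 0" by (simp add: add_pos_nonneg)
    have "Re ((1+z)/(1-z)) = ((1+a)*(1-a) - b*b) / ((1-a)^2 + b^2)"
      unfolding z Re_divide by (simp add: algebra_simps)
    moreover have "0 < (1+a)*(1-a) - b*b" using ab by (simp add: power2_eq_square algebra_simps)
    ultimately show ?thesis using nz Qf_koebe[OF zb] by simp
  qed
  ultimately show ?thesis unfolding starlike_def classA_def by auto
qed

lemma five_thirds_notin: "5/3 \<notin> OmegaNe"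
proof
  assume "5/3 \<in> OmegaNe"
  then obtain u where u: "cmod u < 1" "phiNe u = 5/3" unfolding OmegaNe_def by auto
  have "(u - 1)^2 * (u + 2) = - 3 * (phiNe u - 5/3)" unfolding phiNe_def
    by (simp add: algebra_simps power2_eq_square power3_eq_cube)
  then have "(u - 1)^2 * (u + 2) = 0" using u(2) by simp
  then have "u - 1 = 0 \<or> u + 2 = 0" by simp
  then have "u = 1 \<or> u = -2"
  proof
    assume "u + 2 = 0" then show ?thesis by (metis add_eq_0_iff2)
  qed simp
  with u(1) show False by auto
qed

lemma five_thirds_frontier: "5/3 \<in> frontier OmegaNe"
proof -
  have "phiNe ` closure (ball 0 1) \<subseteq> closure OmegaNe"
    by (rule image_closure_subset[OF phiNe_cont]) (auto simp: OmegaNe_def intro: closure_subset[THEN subsetD])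
  moreover have "phiNe 1 = 5/3" by (simp add: phiNe_def)
  ultimately have "5/3 \<in> closure OmegaNe" by force
  then show ?thesis using five_thirds_notin OmegaNe_open by (simp add: frontier_def interior_open)
qed

theorem mainTheorem4:
  shows "radiusNe starlike = 1 / 4
    \<and> (\<forall>f\<in>starlike. Qf f ` ball 0 (1/4) \<subseteq> OmegaNe)
    \<and> koebe \<in> starlike
    \<and> Qf koebe ` sphere 0 (1/4) \<inter> frontier OmegaNe \<noteq> {}"
proof (intro conjI)
  show A: "\<forall>f\<in>starlike. Qf f ` ball 0 (1/4) \<subseteq> OmegaNe" using star_Q by blast
  show "koebe \<in> starlike" by (rule koebe_star)
  have qk: "Qf koebe (1/4) = 5/3" using Qf_koebe[of "1/4"] by simp
  show "Qf koebe ` sphere 0 (1/4) \<inter> frontier OmegaNe \<noteq> {}"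
  proof -
    have "(1/4::complex) \<in> sphere 0 (1/4)" by simp
    then have "5/3 \<in> Qf koebe ` sphere 0 (1/4)" using qk by (metis image_eqI)
    with five_thirds_frontier show ?thesis by blast
  qed
  show "radiusNe starlike = 1 / 4" unfolding radiusNe_def
  proof (rule cSup_eq_maximum)
    show "1/4 \<in> {\<rho>. 0 < \<rho> \<and> \<rho> \<le> 1 \<and> (\<forall>f\<in>starlike. Qf f ` ball 0 \<rho> \<subseteq> OmegaNe)}"
      using A by simp
  next
    fix \<rho> assume "\<rho> \<in> {\<rho>. 0 < \<rho> \<and> \<rho> \<le> 1 \<and> (\<forall>f\<in>starlike. Qf f ` ball 0 \<rho> \<subseteq> OmegaNe)}"
    then have r: "\<forall>f\<in>starlike. Qf f ` ball 0 \<rho> \<subseteq> OmegaNe" by simp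
    show "\<rho> \<le> 1/4"
    proof (rule ccontr)
      assume "\<not> \<rho> \<le> 1/4"
      then have "(1/4::complex) \<in> ball 0 \<rho>" by simp
      then have "Qf koebe (1/4) \<in> OmegaNe" using r koebe_star by blast
      then have "5/3 \<in> OmegaNe" by (simp only: qk)
      with five_thirds_notin show False by blast
    qed
  qed
qed

end
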